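(* Consider a single round of the following quantum protocol, with honest Bob and an arbitrary strategy of Alice. 1. Alice prepares an arbitrary (possibly mixed) state $\rho_{AB}$ and sends subsystem $B$ to Bob through a noiseless channel. 2. Bob chooses a uniformly random bit $b$, independent of everything else, and announces it. 3. Alice performs a two-outcome POVM on subsystem $A$ (which may depend on $b$) and announces a bit $a$ determined by its outcome. 4. Bob measures his system with the projective measurement $\{|\psi_a\rangle\langle\psi_a|,\ I-|\psi_a\rangle\langle\psi_a|\}$, setting $f=1$ for the first outcome and $f=0$ otherwise. Bob's output bit is $y=a\oplus b$. Let $E(f)=\mathrm P(f=1)$. Then for every $c\in\{0,1\}$, \[ \mathrm P(y=c)\ \le\ \mathcal F(E(f)), \qquad\text{where}\qquad \mathcal F(u)=\min\Big\{\tfrac12+\frac{\sqrt{1-u}}{\sqrt2\,\sin^2\theta}+\frac{1-u}{\sin^2\theta},\ 1\Big\}. \] Moreover, $\mathcal F$ is concave and monotonically non-increasing on $[0,1]$.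
   Context: Fix $\theta\in(0,\pi/2]$. Let $|\psi_0\rangle,|\psi_1\rangle$ be two pure states with $|\langle\psi_0|\psi_1\rangle|^2=\cos^2\theta$. *)

theory Defs
  imports "HOL-Analysis.Analysis"
begin

text \<open>A Hilbert space of dimension CARD('n) is
  modelled by vectors complex^'n, operators by complex^'n^'n. The composite system AB
  is indexed by the product type 'a \<times> 'b (Kronecker/tensor product). Bits are bool
  (False = 0, True = 1), so a \<oplus> b is (a \<noteq> b).\<close>

definition cinner :: "complex^'n \<Rightarrow> complex^'n \<Rightarrow> complex" where
  "cinner u v = (\<Sum>i\<in>UNIV. cnj (u $ i) * v $ i)"

definition proj :: "complex^'n \<Rightarrow> complex^'n^'n" where
  "proj \<psi> = (\<chi> i j. \<psi> $ i * cnj (\<psi> $ j))"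

definition kron :: "complex^'a^'a \<Rightarrow> complex^'b^'b \<Rightarrow> complex^('a \<times> 'b)^('a \<times> 'b)" where
  "kron X Y = (\<chi> p q. X $ fst p $ fst q * Y $ snd p $ snd q)"

definition trace :: "complex^'n^'n \<Rightarrow> complex" where
  "trace A = (\<Sum>i\<in>UNIV. A $ i $ i)"

definition psd :: "complex^'n^'n \<Rightarrow> bool" where
  "psd A \<longleftrightarrow> (\<forall>v. cinner v (A *v v) \<in> \<real> \<and> 0 \<le> Re (cinner v (A *v v)))"

definition density :: "complex^'n^'n \<Rightarrow> bool" where
  "density \<rho> \<longleftrightarrow> psd \<rho> \<and> trace \<rho> = 1"

definition povm2 :: "(bool \<Rightarrow> complex^'n^'n) \<Rightarrow> bool" where
  "povm2 M \<longleftrightarrow> psd (M False) \<and> psd (M True) \<and> M False + M True = mat 1"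

definition prob :: "complex^'n^'n \<Rightarrow> complex^'n^'n \<Rightarrow> real" where
  "prob \<rho> X = Re (trace (\<rho> ** X))"

text \<open>Protocol probabilities. b is Bob's uniform bit, M b is Alice's POVM on A after
  hearing b (outcome = announced bit a), Bob measures {|\<psi>_a\<rangle>\<langle>\<psi>_a|, I - |\<psi>_a\<rangle>\<langle>\<psi>_a|} on B.\<close>
definition Ef :: "complex^('a::finite \<times> 'b::finite)^('a \<times> 'b) \<Rightarrow> (bool \<Rightarrow> bool \<Rightarrow> complex^'a^'a)
                   \<Rightarrow> (bool \<Rightarrow> complex^'b) \<Rightarrow> real" where
  "Ef \<rho> M \<psi> = (\<Sum>b\<in>UNIV. \<Sum>a\<in>UNIV. (1/2) * prob \<rho> (kron (M b a) (proj (\<psi> a))))"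

definition Py :: "complex^('a::finite \<times> 'b::finite)^('a \<times> 'b) \<Rightarrow> (bool \<Rightarrow> bool \<Rightarrow> complex^'a^'a)
                   \<Rightarrow> bool \<Rightarrow> real" where
  "Py \<rho> M c = (\<Sum>b\<in>UNIV. \<Sum>a\<in>{a. (a \<noteq> b) = c}. (1/2) * prob \<rho> (kron (M b a) (mat 1)))"

definition Fbound :: "real \<Rightarrow> real \<Rightarrow> real" where
  "Fbound \<theta> u = min (1/2 + sqrt (1 - u) / (sqrt 2 * (sin \<theta>)\<^sup>2) + (1 - u) / (sin \<theta>)\<^sup>2) 1"

end

theory Submission
  imports Defs
begin


lemma sqrt_concave_pt:
  fixes a b t :: real assumes "0 \<le> a" "0 \<le> b" "0 \<le> t" "t \<le> 1"
  shows "(1-t) * sqrt a + t * sqrt b \<le> sqrt ((1-t)*a + t*b)"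
proof (rule real_le_rsqrt)
  have "2 * (sqrt a * sqrt b) \<le> a + b"
    using assms sum_squares_bound[of "sqrt a" "sqrt b"] by simp
  hence "t*(1-t)*(2 * (sqrt a * sqrt b)) \<le> t*(1-t)*(a+b)"
    using assms by (intro mult_left_mono) auto
  thus "((1-t) * sqrt a + t * sqrt b)\<^sup>2 \<le> (1-t)*a + t*b"
    using assms by (simp add: power2_eq_square algebra_simps real_sqrt_mult[symmetric])
qed

lemma Fbound_concave: assumes "0 < \<theta>" "\<theta> \<le> pi/2" shows "concave_on {0..1} (Fbound \<theta>)"
proof (rule concave_on_linorderI)
  fix t x y :: real assume t: "0 < t" "t < 1" and x: "x \<in> {0..1}" and y: "y \<in> {0..1}"
  define s where "s = (sin \<theta>)\<^sup>2"
  have s: "0 < s" unfolding s_def using assms sin_gt_zero[of \<theta>] by auto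
  define g where "g u = 1/2 + sqrt (1 - u) / (sqrt 2 * s) + (1 - u) / s" for u
  have F: "Fbound \<theta> u = min (g u) 1" for u unfolding Fbound_def g_def s_def by simp
  have e: "1 - ((1 - t) *\<^sub>R x + t *\<^sub>R y) = (1-t)*(1-x) + t*(1-y)" by (simp add: algebra_simps)
  have sq: "(1-t) * sqrt (1-x) + t * sqrt (1-y) \<le> sqrt (1 - ((1 - t) *\<^sub>R x + t *\<^sub>R y))"
    unfolding e using x y t by (intro sqrt_concave_pt) auto
  have "(1-t) * g x + t * g y = 1/2 + ((1-t) * sqrt (1-x) + t * sqrt (1-y)) / (sqrt 2 * s)
      + (1 - ((1 - t) *\<^sub>R x + t *\<^sub>R y)) / s"
    unfolding g_def e using s by (simp add: field_simps)
  also have "\<dots> \<le> g ((1 - t) *\<^sub>R x + t *\<^sub>R y)"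
    unfolding g_def using sq s by (simp add: divide_right_mono)
  finally have g: "(1-t) * g x + t * g y \<le> g ((1 - t) *\<^sub>R x + t *\<^sub>R y)" .
  have "(1-t) * min (g x) 1 + t * min (g y) 1 \<le> (1-t) * g x + t * g y"
    using t by (intro add_mono mult_left_mono) auto
  moreover have "(1-t) * min (g x) 1 + t * min (g y) 1 \<le> (1-t) * 1 + t * 1"
    using t by (intro add_mono mult_left_mono) auto
  ultimately show "(1 - t) * Fbound \<theta> x + t * Fbound \<theta> y \<le> Fbound \<theta> ((1 - t) *\<^sub>R x + t *\<^sub>R y)"
    unfolding F using g by simp
qed simp

lemma Fbound_antimono: assumes "0 < \<theta>" "\<theta> \<le> pi/2" shows "antimono_on {0..1} (Fbound \<theta>)"
proof (rule monotone_onI)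
  fix x y :: real assume x: "x \<in> {0..1}" and y: "y \<in> {0..1}" and xy: "x \<le> y"
  define s where "s = (sin \<theta>)\<^sup>2"
  have s: "0 < s" unfolding s_def using assms sin_gt_zero[of \<theta>] by auto
  have "sqrt (1-y) \<le> sqrt (1-x)" using xy by simp
  hence "sqrt (1-y) / (sqrt 2 * s) \<le> sqrt (1-x) / (sqrt 2 * s)" using s by (simp add: divide_right_mono)
  moreover have "(1-y)/s \<le> (1-x)/s" using xy s by (simp add: divide_right_mono)
  ultimately show "Fbound \<theta> y \<le> Fbound \<theta> x" unfolding Fbound_def s_def[symmetric] by linarith
qed



definition Qf :: "complex^'n^'n \<Rightarrow> complex^'n \<Rightarrow> complex" where
  "Qf A v = cinner v (A *v v)"

lemma cinner_add_left: "cinner (u + v) w = cinner u w + cinner v w"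
  by (simp add: cinner_def sum.distrib algebra_simps)
lemma cinner_add_right: "cinner w (u + v) = cinner w u + cinner w v"
  by (simp add: cinner_def sum.distrib algebra_simps)
lemma cinner_diff_left: "cinner (u - v) w = cinner u w - cinner v w"
  by (simp add: cinner_def sum_subtractf algebra_simps)
lemma cinner_diff_right: "cinner w (u - v) = cinner w u - cinner w v"
  by (simp add: cinner_def sum_subtractf algebra_simps)
lemma cinner_scale_left: "cinner (c *s u) w = cnj c * cinner u w"
  by (simp add: cinner_def sum_distrib_left algebra_simps)
lemma cinner_scale_right: "cinner w (c *s u) = c * cinner w u"
  by (simp add: cinner_def sum_distrib_left algebra_simps)
lemma cinner_cnj: "cnj (cinner u v) = cinner v u"
  by (simp add: cinner_def mult.commute)
lemma cinner_self: "cinner v v = of_real (\<Sum>i\<in>UNIV. (cmod (v$i))\<^sup>2)"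
proof -
  have "cinner v v = (\<Sum>i\<in>UNIV. of_real ((cmod (v$i))\<^sup>2))"
    unfolding cinner_def by (intro sum.cong refl) (metis complex_norm_square mult.commute)
  thus ?thesis by (simp only: of_real_sum)
qed
lemma cinner_self_real: "cinner v v = of_real (Re (cinner v v))"
  by (simp add: cinner_self)
lemma cinner_self_nonneg: "0 \<le> Re (cinner v v)"
  by (simp add: cinner_self sum_nonneg)
lemma cinner_self_eq0: "cinner v v = 0 \<Longrightarrow> v = 0"
proof -
  assume "cinner v v = 0"
  hence "(\<Sum>i\<in>UNIV. (cmod (v$i))\<^sup>2) = 0" unfolding cinner_self by (simp only: of_real_eq_0_iff)
  hence "\<forall>i\<in>UNIV. (cmod (v$i))\<^sup>2 = 0" by (subst (asm) sum_nonneg_eq_0_iff) auto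
  thus "v = 0" by (simp add: vec_eq_iff)
qed

lemma mv_scale: "(A::complex^'n^'m) *v (c *s v) = c *s (A *v v)"
  unfolding vec_eq_iff matrix_vector_mult_def vector_smult_component vec_lambda_beta sum_distrib_left
  by (intro allI sum.cong refl) (rule mult.left_commute)

lemma proj_mv: "proj w *v v = cinner w v *s w"
  by (simp add: vec_eq_iff matrix_vector_mult_def proj_def cinner_def sum_distrib_left algebra_simps)

lemma Qf_add_mat: "Qf (A + B) v = Qf A v + Qf B v"
  by (simp add: Qf_def matrix_vector_mult_add_rdistrib cinner_add_right)
lemma Qf_diff_mat: "Qf (A - B) v = Qf A v - Qf B v"
  by (simp add: Qf_def matrix_vector_mult_diff_rdistrib cinner_diff_right)
lemma Qf_proj: "Qf (proj w) v = of_real ((cmod (cinner w v))\<^sup>2)"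
proof -
  have e: "cinner v w = cnj (cinner w v)" by (simp add: cinner_cnj)
  show ?thesis unfolding Qf_def proj_mv cinner_scale_right e complex_norm_square by simp
qed

lemma Qf_expand: "Qf A (u + w) = Qf A u + Qf A w + cinner u (A *v w) + cinner w (A *v u)"
  by (simp add: Qf_def matrix_vector_right_distrib cinner_add_left cinner_add_right)

lemma Qf_scale: "Qf A (c *s u) = cnj c * c * Qf A u"
  by (simp add: Qf_def mv_scale cinner_scale_left cinner_scale_right)

lemma cinner_axis: "cinner (axis i c) x = cnj c * x$i"
proof -
  have "(\<Sum>k\<in>UNIV. cnj ((axis i c)$k) * x$k) = (\<Sum>k\<in>UNIV. if k = i then cnj c * x$i else 0)"
    by (intro sum.cong) (auto simp: axis_def)
  thus ?thesis unfolding cinner_def by simp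
qed

lemma mv_axis: "((A::complex^'n^'m) *v axis j c) $ i = A$i$j * c"
proof -
  have "(\<Sum>k\<in>UNIV. A$i$k * (axis j c)$k) = (\<Sum>k\<in>UNIV. if k = j then A$i$j * c else 0)"
    by (intro sum.cong) (auto simp: axis_def)
  thus ?thesis unfolding matrix_vector_mult_def by simp
qed

lemma axis_mv_entry: "cinner (axis i 1) (A *v axis j 1) = A $ i $ j"
  by (simp add: cinner_axis mv_axis)

definition herm :: "complex^'n^'n \<Rightarrow> bool" where
  "herm A \<longleftrightarrow> (\<forall>i j. A$j$i = cnj (A$i$j))"

lemma psdD: "psd A \<Longrightarrow> Qf A v = of_real (Re (Qf A v)) \<and> 0 \<le> Re (Qf A v)"
  unfolding psd_def Qf_def by (metis Reals_cases Re_complex_of_real)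

lemma psd_herm: fixes A :: "complex^'n^'n" assumes "psd A" shows "herm A"
  unfolding herm_def
proof (intro allI)
  fix i j :: 'n
  let ?ei = "axis i (1::complex) :: complex^'n" and ?ej = "axis j (1::complex) :: complex^'n"
  have r: "Im (Qf A v) = 0" for v using psdD[OF assms, of v] by (metis Im_complex_of_real)
  have 1: "Qf A (?ei + ?ej) = Qf A ?ei + Qf A ?ej + A$i$j + A$j$i"
    by (simp add: Qf_expand axis_mv_entry)
  have 2: "Qf A (?ei + \<i> *s ?ej) = Qf A ?ei + Qf A ?ej + \<i> * A$i$j - \<i> * A$j$i"
    by (simp add: Qf_expand axis_mv_entry Qf_scale mv_scale cinner_scale_left cinner_scale_right)
  have a: "Im (A$i$j + A$j$i) = 0" using 1 r[of "?ei + ?ej"] r[of ?ei] r[of ?ej] by simp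
  have b: "Re (A$i$j - A$j$i) = 0" using 2 r[of "?ei + \<i> *s ?ej"] r[of ?ei] r[of ?ej] by simp
  show "A$j$i = cnj (A$i$j)" using a b by (simp add: complex_eq_iff)
qed

lemma herm_swap: assumes "herm A" shows "cinner u (A *v v) = cnj (cinner v (A *v u))"
proof -
  have h: "cnj (A$i$j) = A$j$i" for i j using assms unfolding herm_def by metis
  have "cnj (cinner v (A *v u)) = (\<Sum>i\<in>UNIV. \<Sum>j\<in>UNIV. v$i * (cnj (A$i$j) * cnj (u$j)))"
    unfolding cinner_def matrix_vector_mult_def by (simp add: sum_distrib_left)
  also have "\<dots> = (\<Sum>i\<in>UNIV. \<Sum>j\<in>UNIV. cnj (u$j) * (A$j$i * v$i))"
    unfolding h by (intro sum.cong refl) (simp only: mult.commute mult.left_commute)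
  also have "\<dots> = (\<Sum>j\<in>UNIV. \<Sum>i\<in>UNIV. cnj (u$j) * (A$j$i * v$i))"
    by (rule sum.swap)
  also have "\<dots> = cinner u (A *v v)"
    unfolding cinner_def matrix_vector_mult_def by (simp add: sum_distrib_left)
  finally show ?thesis by simp
qed

lemma Qf_expand_herm: assumes "herm A"
  shows "Re (Qf A (u + w)) = Re (Qf A u) + Re (Qf A w) + 2 * Re (cinner w (A *v u))"
  using herm_swap[OF assms, of u w] by (simp add: Qf_expand)



definition supp :: "'n set \<Rightarrow> complex^'n^'n \<Rightarrow> bool" where
  "supp S A \<longleftrightarrow> (\<forall>i j. A$i$j \<noteq> 0 \<longrightarrow> i \<in> S \<and> j \<in> S)"

lemma psd_entry: "psd A \<Longrightarrow> A$i$i = of_real (Re (A$i$i)) \<and> 0 \<le> Re (A$i$i)"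
  using psdD[of A "axis i 1"] by (simp add: Qf_def axis_mv_entry)

lemma psd_zero_diag:
  assumes A: "psd A" and d: "A$i$i = 0" shows "A$i$j = 0"
proof (rule ccontr)
  assume z: "A$i$j \<noteq> 0"
  let ?z = "A$i$j"
  have h: "herm A" using psd_herm[OF A] .
  let ?q = "Re (Qf A (axis j 1))"
  define t where "t = (?q + 1) / (2 * (cmod ?z)\<^sup>2)"
  have zpos: "0 < (cmod ?z)\<^sup>2" using z by simp
  let ?l = "- (of_real t * ?z)"
  have "0 \<le> Re (Qf A (axis j 1 + ?l *s axis i 1))" using psdD[OF A] by blast
  also have "Re (Qf A (axis j 1 + ?l *s axis i 1)) = ?q + Re (Qf A (?l *s axis i 1))
      + 2 * Re (cinner (?l *s axis i 1) (A *v axis j 1))"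
    by (rule Qf_expand_herm[OF h])
  also have "Qf A (?l *s axis i 1) = 0" unfolding Qf_scale by (simp add: Qf_def axis_mv_entry d)
  also have "cinner (?l *s axis i 1) (A *v axis j 1) = - of_real t * (cnj ?z * ?z)"
    unfolding cinner_scale_left axis_mv_entry by simp
  also have "Re (- of_real t * (cnj ?z * ?z)) = - t * (cmod ?z)\<^sup>2"
    by (simp add: complex_norm_square[symmetric] mult.commute)
  finally have "0 \<le> ?q - 2 * t * (cmod ?z)\<^sup>2" by simp
  moreover have "2 * t * (cmod ?z)\<^sup>2 = ?q + 1" unfolding t_def using zpos by simp
  ultimately show False by simp
qed

lemma decomp_step:
  assumes A: "psd A" and sA: "supp (insert i S) A"
  obtains A' w where "psd A'" "supp S A'" "A = A' + proj w"
proof (cases "A$i$i = 0")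
  case True
  have h: "herm A" using psd_herm[OF A] .
  have r0: "A$i$j = 0" for j using psd_zero_diag[OF A True] .
  have c0: "A$j$i = 0" for j using r0[of j] h unfolding herm_def by (metis complex_cnj_zero)
  have "supp S A" unfolding supp_def
  proof (intro allI impI)
    fix a b assume "A$a$b \<noteq> 0"
    with sA r0 c0 show "a \<in> S \<and> b \<in> S" unfolding supp_def by blast
  qed
  moreover have "A = A + proj 0" by (simp add: proj_def vec_eq_iff)
  ultimately show ?thesis using that A by blast
next
  case False
  have h: "herm A" using psd_herm[OF A] .
  define d where "d = Re (A$i$i)"
  have dA: "A$i$i = of_real d" and d0: "0 \<le> d" using psd_entry[OF A, of i] unfolding d_def by auto
  have dpos: "0 < d" using False dA d0 by force
  define sd where "sd = sqrt d"
  have sdpos: "0 < sd" unfolding sd_def using dpos by simp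
  have sdd: "sd * sd = d" unfolding sd_def using dpos by simp
  define w where "w = (\<chi> j. A$j$i / of_real sd)"
  define A' where "A' = A - proj w"
  have hc: "cnj (A$b$i) = A$i$b" for b using h unfolding herm_def by metis
  have entry: "A'$a$b = A$a$b - A$a$i * A$i$b / A$i$i" for a b
  proof -
    have "A'$a$b = A$a$b - (A$a$i / of_real sd) * (cnj (A$b$i) / of_real sd)"
      by (simp add: A'_def proj_def w_def)
    also have "\<dots> = A$a$b - A$a$i * A$i$b / (of_real sd * of_real sd)" by (simp add: hc)
    also have "of_real sd * of_real sd = A$i$i" by (simp add: dA sdd[symmetric])
    finally show ?thesis .
  qed
  have "supp S A'" unfolding supp_def
  proof (intro allI impI)
    fix a b assume nz: "A'$a$b \<noteq> 0"
    have "a \<noteq> i" using nz False by (auto simp: entry)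
    moreover have "b \<noteq> i" using nz False by (auto simp: entry)
    moreover have "a \<in> insert i S"
    proof (rule ccontr)
      assume "a \<notin> insert i S"
      hence "A$a$b = 0" "A$a$i = 0" using sA unfolding supp_def by blast+
      thus False using nz by (simp add: entry)
    qed
    moreover have "b \<in> insert i S"
    proof (rule ccontr)
      assume "b \<notin> insert i S"
      hence "A$a$b = 0" "A$i$b = 0" using sA unfolding supp_def by blast+
      thus False using nz by (simp add: entry)
    qed
    ultimately show "a \<in> S \<and> b \<in> S" by blast
  qed
  moreover have "psd A'" unfolding psd_def
  proof (intro allI conjI)
    fix v
    define \<mu> where "\<mu> = cinner w v"
    define l where "l = - \<mu> / of_real sd"
    have QA': "Qf A' v = Qf A v - of_real ((cmod \<mu>)\<^sup>2)"
      by (simp add: A'_def Qf_diff_mat Qf_proj \<mu>_def)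
    have Avi: "(A *v v) $ i = of_real sd * \<mu>"
    proof -
      have "(A *v v) $ i = (\<Sum>k\<in>UNIV. cnj (A$k$i) * v$k)"
        by (simp add: matrix_vector_mult_def hc)
      also have "\<dots> = of_real sd * (\<Sum>k\<in>UNIV. cnj (A$k$i / of_real sd) * v$k)"
        using sdpos by (simp add: sum_distrib_left)
      finally show ?thesis by (simp add: \<mu>_def cinner_def w_def)
    qed
    have sdc: "of_real sd * of_real sd = (of_real d :: complex)"
      by (simp add: sdd[symmetric])
    have sdnz: "(of_real sd :: complex) \<noteq> 0" using sdpos by simp
    have cl: "cnj l = - cnj \<mu> / of_real sd" unfolding l_def by simp
    have ci: "cinner (l *s axis i 1) (A *v v) = cnj l * ((A *v v) $ i)"
      unfolding cinner_scale_left cinner_axis by simp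
    have "Re (Qf A (v + l *s axis i 1)) = Re (Qf A v) + Re (Qf A (l *s axis i 1))
        + 2 * Re (cinner (l *s axis i 1) (A *v v))"
      by (rule Qf_expand_herm[OF h])
    also have "Qf A (l *s axis i 1) = of_real ((cmod \<mu>)\<^sup>2)"
    proof -
      have "Qf A (l *s axis i 1) = cnj l * l * of_real d"
        unfolding Qf_scale by (simp add: Qf_def axis_mv_entry dA)
      also have "\<dots> = (cnj \<mu> * \<mu>) * (of_real d / (of_real sd * of_real sd))"
        unfolding cl l_def by (simp add: field_simps)
      also have "\<dots> = \<mu> * cnj \<mu>" unfolding sdc using dpos by simp
      also have "\<dots> = of_real ((cmod \<mu>)\<^sup>2)"
        by (simp only: complex_norm_square)
      finally show ?thesis .
    qed
    also have "cinner (l *s axis i 1) (A *v v) = - of_real ((cmod \<mu>)\<^sup>2)"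
    proof -
      have "cinner (l *s axis i 1) (A *v v) = - (\<mu> * cnj \<mu>) * (of_real sd / of_real sd)"
        unfolding ci Avi cl by (simp add: field_simps)
      also have "\<dots> = - (\<mu> * cnj \<mu>)" using sdnz by simp
      finally show ?thesis by (simp only: complex_norm_square)
    qed
    finally have eq: "Re (Qf A (v + l *s axis i 1)) = Re (Qf A v) - (cmod \<mu>)\<^sup>2" by simp
    have "0 \<le> Re (Qf A (v + l *s axis i 1))" using psdD[OF A] by blast
    hence "0 \<le> Re (Qf A' v)" using eq QA' by simp
    thus "0 \<le> Re (cinner v (A' *v v))" by (simp add: Qf_def)
    have "Qf A v \<in> \<real>" using psdD[OF A, of v] by (metis Reals_of_real)
    thus "cinner v (A' *v v) \<in> \<real>" using QA' unfolding Qf_def by simp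
  qed
  moreover have "A = A' + proj w" by (simp add: A'_def)
  ultimately show ?thesis using that by blast
qed

lemma decomp_aux:
  assumes "finite S"
  shows "\<forall>A. psd A \<and> supp S A \<longrightarrow> (\<exists>W. A = sum_list (map proj W))"
  using assms
proof (induction S rule: finite_induct)
  case empty
  show ?case
  proof (intro allI impI)
    fix A :: "complex^'a^'a" assume "psd A \<and> supp {} A"
    hence "A = 0" by (auto simp: supp_def vec_eq_iff)
    thus "\<exists>W. A = sum_list (map proj W)" by (intro exI[of _ "[]"]) simp
  qed
next
  case (insert i S)
  show ?case
  proof (intro allI impI)
    fix A :: "complex^'a^'a" assume "psd A \<and> supp (insert i S) A"
    then obtain A' w where a1: "psd A'" and a2: "supp S A'" and a3: "A = A' + proj w"
      using decomp_step by metis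
    obtain W where "A' = sum_list (map proj W)" using insert.IH a1 a2 by blast
    hence "A = sum_list (map proj (w # W))" using a3 by (simp add: add.commute)
    thus "\<exists>W. A = sum_list (map proj W)" by blast
  qed
qed

lemma decomp: "psd (A::complex^'n::finite^'n) \<Longrightarrow> \<exists>W. A = sum_list (map proj W)"
proof -
  assume "psd A"
  moreover have "supp UNIV A" by (simp add: supp_def)
  moreover have "finite (UNIV::'n set)" by simp
  ultimately show ?thesis using decomp_aux[of "UNIV::'n set"] by blast
qed

lemma trace_add_mult: "trace ((A + B) ** C) = trace (A ** C) + trace (B ** C)"
  by (simp add: trace_def matrix_matrix_mult_def distrib_right sum.distrib)
lemma trace_add_mult2: "trace (C ** (A + B)) = trace (C ** A) + trace (C ** B)"
  by (simp add: trace_def matrix_matrix_mult_def distrib_left sum.distrib)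
lemma trace_diff_mult2: "trace (C ** (A - B)) = trace (C ** A) - trace (C ** B)"
  by (simp add: trace_def matrix_matrix_mult_def right_diff_distrib sum_subtractf)
lemma trace_zero_mult: "trace (0 ** C) = 0"
  by (simp add: trace_def matrix_matrix_mult_def)

lemma trace_proj_mult: "trace (proj w ** B) = Qf B w"
proof -
  have "trace (proj w ** B) = (\<Sum>i\<in>UNIV. \<Sum>j\<in>UNIV. w$i * cnj (w$j) * B$j$i)"
    by (simp add: trace_def matrix_matrix_mult_def proj_def)
  also have "\<dots> = (\<Sum>j\<in>UNIV. \<Sum>i\<in>UNIV. cnj (w$j) * (B$j$i * w$i))"
    by (subst sum.swap) (simp add: mult.commute mult.left_commute)
  also have "\<dots> = Qf B w"
    by (simp add: Qf_def cinner_def matrix_vector_mult_def sum_distrib_left)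
  finally show ?thesis .
qed

lemma trace_mult_comm: "trace (A ** B) = trace (B ** A)"
  unfolding trace_def matrix_matrix_mult_def
  by (simp, subst sum.swap) (simp add: mult.commute)

lemma trace_psd:
  assumes "psd A" "psd B"
  shows "trace (A ** B) = of_real (Re (trace (A ** B))) \<and> 0 \<le> Re (trace (A ** B))"
proof -
  obtain W where W: "A = sum_list (map proj W)" using decomp[OF assms(1)] by blast
  have "trace (sum_list (map proj W) ** B) = of_real (Re (trace (sum_list (map proj W) ** B)))
      \<and> 0 \<le> Re (trace (sum_list (map proj W) ** B))"
  proof (induction W)
    case Nil then show ?case by (simp add: trace_zero_mult trace_def)
  next
    case (Cons w W)
    have "Qf B w = of_real (Re (Qf B w)) \<and> 0 \<le> Re (Qf B w)" using psdD[OF assms(2)] .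
    with Cons show ?case by (simp add: trace_add_mult trace_proj_mult)
  qed
  thus ?thesis unfolding W[symmetric] .
qed



definition ptr :: "complex^('a::finite \<times> 'b::finite)^('a \<times> 'b) \<Rightarrow> complex^'a^'a \<Rightarrow> complex^'b^'b" where
  "ptr \<rho> M = (\<chi> j j'. \<Sum>i\<in>UNIV. \<Sum>i'\<in>UNIV. \<rho>$(i,j)$(i',j') * M$i'$i)"

lemma sum_UNIV_prod: "(\<Sum>p\<in>(UNIV::('a::finite \<times> 'b::finite) set). f p) = (\<Sum>i\<in>UNIV. \<Sum>j\<in>UNIV. f (i,j))"
proof -
  have "(\<Sum>p\<in>(UNIV::('a \<times> 'b) set). f p) = (\<Sum>p\<in>UNIV \<times> UNIV. f p)" by simp
  also have "\<dots> = (\<Sum>i\<in>UNIV. \<Sum>j\<in>UNIV. f (i,j))" by (rule sum.cartesian_product')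
  finally show ?thesis .
qed

lemma trace_ptr: "trace (\<rho> ** kron M K) = trace (ptr \<rho> M ** K)"
proof -
  let ?f = "\<lambda>i j i' j'. \<rho>$(i,j)$(i',j') * M$i'$i * K$j'$j"
  have "trace (\<rho> ** kron M K) = (\<Sum>i\<in>UNIV. \<Sum>j\<in>UNIV. \<Sum>i'\<in>UNIV. \<Sum>j'\<in>UNIV. ?f i j i' j')"
    unfolding trace_def matrix_matrix_mult_def kron_def sum_UNIV_prod by (simp add: mult.assoc)
  also have "\<dots> = (\<Sum>j\<in>UNIV. \<Sum>i\<in>UNIV. \<Sum>i'\<in>UNIV. \<Sum>j'\<in>UNIV. ?f i j i' j')"
    by (rule sum.swap)
  also have "\<dots> = (\<Sum>j\<in>UNIV. \<Sum>i\<in>UNIV. \<Sum>j'\<in>UNIV. \<Sum>i'\<in>UNIV. ?f i j i' j')"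
    by (intro sum.cong refl) (rule sum.swap)
  also have "\<dots> = (\<Sum>j\<in>UNIV. \<Sum>j'\<in>UNIV. \<Sum>i\<in>UNIV. \<Sum>i'\<in>UNIV. ?f i j i' j')"
    by (intro sum.cong refl) (rule sum.swap)
  also have "\<dots> = trace (ptr \<rho> M ** K)"
    by (simp add: trace_def matrix_matrix_mult_def ptr_def sum_distrib_right)
  finally show ?thesis .
qed

lemma ptr_add: "ptr \<rho> (M1 + M2) = ptr \<rho> M1 + ptr \<rho> M2"
  by (simp add: ptr_def vec_eq_iff distrib_left sum.distrib)

lemma kron_mat1: "kron (mat 1) (mat 1) = (mat 1 :: complex^('a::finite \<times> 'b::finite)^('a \<times> 'b))"
  by (auto simp: kron_def mat_def vec_eq_iff prod_eq_iff)

lemma Qf_kron_proj: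
  fixes M :: "complex^'a::finite^'a" and v :: "complex^'b::finite" and u :: "complex^('a \<times> 'b)"
  shows "Qf (kron M (proj v)) u = Qf M (\<chi> i. \<Sum>j\<in>UNIV. cnj (v$j) * u$(i,j))"
proof -
  let ?g = "\<lambda>i j i' j'. cnj (u$(i,j)) * (M$i$i' * (v$j * (cnj (v$j') * u$(i',j'))))"
  have "Qf (kron M (proj v)) u = (\<Sum>i\<in>UNIV. \<Sum>j\<in>UNIV. \<Sum>i'\<in>UNIV. \<Sum>j'\<in>UNIV. ?g i j i' j')"
    by (simp add: Qf_def cinner_def matrix_vector_mult_def kron_def proj_def sum_UNIV_prod
        sum_distrib_left mult.assoc)
  also have "\<dots> = (\<Sum>i\<in>UNIV. \<Sum>i'\<in>UNIV. \<Sum>j\<in>UNIV. \<Sum>j'\<in>UNIV. ?g i j i' j')"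
    by (rule sum.cong[OF refl], rule sum.swap)
  also have "\<dots> = (\<Sum>i\<in>UNIV. \<Sum>i'\<in>UNIV. \<Sum>j'\<in>UNIV. \<Sum>j\<in>UNIV. ?g i j i' j')"
    by (rule sum.cong[OF refl], rule sum.cong[OF refl], rule sum.swap)
  also have "\<dots> = Qf M (\<chi> i. \<Sum>j\<in>UNIV. cnj (v$j) * u$(i,j))"
    by (simp add: Qf_def cinner_def matrix_vector_mult_def sum_distrib_left sum_distrib_right
        mult.assoc mult.left_commute)
  finally show ?thesis .
qed

lemma psd_kron_proj: fixes M :: "complex^'a::finite^'a" and v :: "complex^'b::finite"
  assumes "psd M" shows "psd (kron M (proj v))"
  unfolding psd_def
proof (intro allI conjI)
  fix u :: "complex^('a \<times> 'b)"
  define u' where "u' = (\<chi> i. \<Sum>j\<in>UNIV. cnj (v$j) * u$(i,j))"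
  have e: "cinner u (kron M (proj v) *v u) = Qf M u'"
    using Qf_kron_proj[of M v u] unfolding u'_def Qf_def .
  have p: "Qf M u' = of_real (Re (Qf M u')) \<and> 0 \<le> Re (Qf M u')" by (rule psdD[OF assms])
  show "cinner u (kron M (proj v) *v u) \<in> \<real>" unfolding e using p by (metis Reals_of_real)
  show "0 \<le> Re (cinner u (kron M (proj v) *v u))" unfolding e using p by blast
qed

lemma psd_ptr: assumes "psd \<rho>" "psd M" shows "psd (ptr \<rho> M)"
  unfolding psd_def
proof (intro allI conjI)
  fix v
  have "cinner v (ptr \<rho> M *v v) = trace (\<rho> ** kron M (proj v))"
    by (simp add: trace_ptr trace_mult_comm[of _ "proj v"] trace_proj_mult Qf_def)
  moreover have "trace (\<rho> ** kron M (proj v)) = of_real (Re (trace (\<rho> ** kron M (proj v))))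
     \<and> 0 \<le> Re (trace (\<rho> ** kron M (proj v)))"
    using trace_psd[OF assms(1) psd_kron_proj[OF assms(2)]] .
  ultimately have cv: "cinner v (ptr \<rho> M *v v) = of_real (Re (cinner v (ptr \<rho> M *v v)))
     \<and> 0 \<le> Re (cinner v (ptr \<rho> M *v v))" by simp
  thus "cinner v (ptr \<rho> M *v v) \<in> \<real>" by (metis Reals_of_real)
  show "0 \<le> Re (cinner v (ptr \<rho> M *v v))" using cv by blast
qed

lemma prob_proj: "prob \<rho> (kron M (proj \<psi>)) = Re (Qf (ptr \<rho> M) \<psi>)"
  by (simp add: prob_def trace_ptr trace_mult_comm[of _ "proj \<psi>"] trace_proj_mult)

lemma prob_id: "prob \<rho> (kron M (mat 1)) = Re (trace (ptr \<rho> M))"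
  by (simp add: prob_def trace_ptr)

lemma trace_ptr_id: "trace (ptr \<rho> (mat 1)) = trace \<rho>"
  using trace_ptr[of \<rho> "mat 1" "mat 1"] by (simp add: kron_mat1)



lemma cinner_zero_left: "cinner 0 v = 0" by (simp add: cinner_def)

lemma CS: "(cmod (cinner u v))\<^sup>2 \<le> Re (cinner u u) * Re (cinner v v)"
proof (cases "u = 0")
  case True thus ?thesis by (simp add: cinner_zero_left cinner_self_nonneg)
next
  case False
  define r where "r = Re (cinner u u)"
  have ru: "cinner u u = of_real r" unfolding r_def by (rule cinner_self_real)
  have r0: "r \<noteq> 0" using False cinner_self_eq0 ru by force
  have rpos: "0 < r" using r0 cinner_self_nonneg[of u] unfolding r_def by linarith
  define c where "c = cinner u v"
  have cvu: "cinner v u = cnj c" unfolding c_def by (simp add: cinner_cnj)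
  define l where "l = c / of_real r"
  define w where "w = v - l *s u"
  have "cinner w w = cinner v v - l * cinner v u - cnj l * cinner u v + cnj l * l * cinner u u"
    unfolding w_def by (simp add: cinner_diff_left cinner_diff_right cinner_scale_left cinner_scale_right algebra_simps)
  also have "\<dots> = cinner v v - c * cnj c / of_real r"
    unfolding cvu ru l_def c_def[symmetric] using r0 by (simp add: field_simps power2_eq_square)
  also have "c * cnj c / of_real r = of_real ((cmod c)\<^sup>2 / r)"
    by (simp only: of_real_divide complex_norm_square)
  finally have "Re (cinner w w) = Re (cinner v v) - (cmod c)\<^sup>2 / r" by simp
  hence "(cmod c)\<^sup>2 / r \<le> Re (cinner v v)" using cinner_self_nonneg[of w] by linarith
  hence "(cmod c)\<^sup>2 \<le> r * Re (cinner v v)" using rpos by (simp add: divide_le_eq mult.commute)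
  thus ?thesis unfolding c_def r_def .
qed

definition smat :: "complex \<Rightarrow> complex^'n^'n \<Rightarrow> complex^'n^'n" where
  "smat c A = (\<chi> a b. c * A$a$b)"

lemma smat_mv: "smat c A *v v = c *s (A *v v)"
  by (simp add: smat_def vec_eq_iff matrix_vector_mult_def sum_distrib_left mult.assoc)

lemma trace_smat: "trace (X ** smat c A) = c * trace (X ** A)"
  by (simp add: trace_def matrix_matrix_mult_def smat_def sum_distrib_left mult.left_commute)

lemma Qf_mat1: "Qf (mat 1) v = cinner v v"
  by (simp add: Qf_def)

lemma psd_mat1: "psd (mat 1 :: complex^'n^'n)"
  unfolding psd_def
proof (intro allI conjI)
  fix v :: "complex^'n"
  show "cinner v (mat 1 *v v) \<in> \<real>" by (simp, metis cinner_self_real Reals_of_real)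
  show "0 \<le> Re (cinner v (mat 1 *v v))" by (simp add: cinner_self_nonneg)
qed

lemma trace_mat1: "trace (X ** mat 1) = trace X" by simp

lemma trace_proj2: "trace (X ** proj w) = Qf X w"
  by (simp add: trace_mult_comm[of X] trace_proj_mult)

lemma Qf_real_psd: assumes "\<And>v. Qf K v = of_real (f v)" "\<And>v. 0 \<le> f v" shows "psd K"
  unfolding psd_def using assms unfolding Qf_def by (metis Re_complex_of_real Reals_of_real)

lemma psd_K1: assumes u: "cinner \<psi> \<psi> = 1" shows "psd (mat 1 - proj \<psi>)"
proof (rule Qf_real_psd)
  fix v
  show "Qf (mat 1 - proj \<psi>) v = of_real (Re (cinner v v) - (cmod (cinner \<psi> v))\<^sup>2)"
    by (simp add: Qf_diff_mat Qf_mat1 Qf_proj) (metis cinner_self_real)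
  show "0 \<le> Re (cinner v v) - (cmod (cinner \<psi> v))\<^sup>2"
    using CS[of \<psi> v] u by simp
qed

lemma psd_K2:
  assumes u: "cinner \<psi> \<psi> = 1" and o: "cinner \<psi> z = 0"
  shows "psd (smat (of_real (Re (cinner z z))) (mat 1 - proj \<psi>) - proj z)"
proof (rule Qf_real_psd)
  fix v
  define r where "r = Re (cinner z z)"
  define a where "a = cinner \<psi> v"
  have A: "cinner v v = of_real (Re (cinner v v))" by (rule cinner_self_real)
  have va0: "cinner v \<psi> = cnj a" unfolding a_def by (simp add: cinner_cnj)
  have vz: "cinner v z = cnj (cinner z v)" by (simp add: cinner_cnj)
  have B: "cinner \<psi> v * cinner v \<psi> = of_real ((cmod a)\<^sup>2)"
    by (simp only: va0 a_def[symmetric] complex_norm_square)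
  have C: "cinner z v * cinner v z = of_real ((cmod (cinner z v))\<^sup>2)"
    by (simp only: vz complex_norm_square)
  have "Qf (smat (of_real (Re (cinner z z))) (mat 1 - proj \<psi>) - proj z) v
      = of_real r * cinner v v - of_real r * (cinner \<psi> v * cinner v \<psi>) - cinner z v * cinner v z"
    unfolding r_def[symmetric]
    by (simp add: Qf_diff_mat Qf_def smat_mv cinner_scale_right matrix_vector_mult_diff_rdistrib
        cinner_diff_right cinner_add_right proj_mv algebra_simps)
  also have "\<dots> = of_real (r * (Re (cinner v v) - (cmod a)\<^sup>2) - (cmod (cinner z v))\<^sup>2)"
    unfolding B C by (subst A) (simp add: algebra_simps)
  finally show "Qf (smat (of_real (Re (cinner z z))) (mat 1 - proj \<psi>) - proj z) v
      = of_real (r * (Re (cinner v v) - (cmod a)\<^sup>2) - (cmod (cinner z v))\<^sup>2)" .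
  define v' where "v' = v - a *s \<psi>"
  have o2: "cinner z \<psi> = 0" using o cinner_cnj[of \<psi> z] by simp
  have e1: "cinner z v' = cinner z v" unfolding v'_def by (simp add: cinner_diff_right cinner_scale_right o2)
  have e2: "cinner v' v' = cinner v v - a * cnj a"
  proof -
    have va: "cinner v \<psi> = cnj a" unfolding a_def by (simp add: cinner_cnj)
    show ?thesis unfolding v'_def
      by (simp add: cinner_diff_left cinner_diff_right cinner_scale_left cinner_scale_right u va a_def[symmetric])
  qed
  have "(cmod (cinner z v))\<^sup>2 \<le> r * Re (cinner v' v')" using CS[of z v'] e1 unfolding r_def by simp
  also have "Re (cinner v' v') = Re (cinner v v) - (cmod a)\<^sup>2"
    unfolding e2 by (simp add: complex_norm_square[symmetric])
  finally show "0 \<le> r * (Re (cinner v v) - (cmod a)\<^sup>2) - (cmod (cinner z v))\<^sup>2" by simp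
qed

lemma trace_nonneg: assumes "psd X" shows "0 \<le> Re (trace X)"
proof -
  have "0 \<le> Re (trace (X ** mat 1))" using trace_psd[OF assms psd_mat1] by blast
  thus ?thesis by simp
qed

lemma E0: assumes X: "psd X" and u: "cinner \<psi> \<psi> = 1" shows "Re (Qf X \<psi>) \<le> Re (trace X)"
proof -
  have "0 \<le> Re (trace (X ** (mat 1 - proj \<psi>)))" using trace_psd[OF X psd_K1[OF u]] by blast
  thus ?thesis by (simp add: trace_diff_mult2 trace_proj2)
qed

lemma L1: assumes X: "psd X" and u: "cinner \<psi> \<psi> = 1" and o: "cinner \<psi> z = 0"
  shows "Re (Qf X z) \<le> Re (cinner z z) * (Re (trace X) - Re (Qf X \<psi>))"
proof -
  have "0 \<le> Re (trace (X ** (smat (of_real (Re (cinner z z))) (mat 1 - proj \<psi>) - proj z)))"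
    using trace_psd[OF X psd_K2[OF u o]] by blast
  thus ?thesis by (simp add: trace_diff_mult2 trace_proj2 trace_smat algebra_simps)
qed

lemma L2:
  assumes X: "psd X" and t: "0 < t"
  shows "(1 - t) * Re (Qf X u) - (1/t) * Re (Qf X w) \<le> Re (Qf X (u + w))"
    and "Re (Qf X (u + w)) \<le> (1 + t) * Re (Qf X u) + (1 + 1/t) * Re (Qf X w)"
proof -
  have h: "herm X" using psd_herm[OF X] .
  define B where "B = Re (cinner w (X *v u))"
  define qu where "qu = Re (Qf X u)"
  define qw where "qw = Re (Qf X w)"
  have qw0: "0 \<le> qw" unfolding qw_def using psdD[OF X] by blast
  have E: "Re (Qf X (u + w)) = qu + qw + 2 * B"
    unfolding qu_def qw_def B_def by (rule Qf_expand_herm[OF h])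
  have "Re (Qf X (of_real t *s u + w)) = t * t * qu + qw + 2 * (t * B)"
    using Qf_expand_herm[OF h, of "of_real t *s u" w]
    by (simp add: Qf_scale mv_scale cinner_scale_right qu_def qw_def B_def)
  moreover have "0 \<le> Re (Qf X (of_real t *s u + w))" using psdD[OF X] by blast
  ultimately have p: "-(t * t * qu + qw) \<le> (2 * B) * t" by (simp add: algebra_simps)
  have n1: "Qf X (-w) = Qf X w" using Qf_scale[of X "-1" w] by simp
  have n2: "cinner (-w) y = - cinner w y" for y using cinner_scale_left[of "-1" w y] by simp
  have "Re (Qf X (of_real t *s u + (-w))) = t * t * qu + qw - 2 * (t * B)"
    using Qf_expand_herm[OF h, of "of_real t *s u" "-w"]
    by (simp add: Qf_scale mv_scale cinner_scale_right n1 n2 qu_def qw_def B_def)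
  moreover have "0 \<le> Re (Qf X (of_real t *s u + (-w)))" using psdD[OF X] by blast
  ultimately have m: "(2 * B) * t \<le> t * t * qu + qw" by (simp add: algebra_simps)
  have k: "(t * qu + qw / t) * t = t * t * qu + qw" using t by (simp add: field_simps)
  have k2: "(- (t * qu + qw / t)) * t = -(t * t * qu + qw)" using k by (simp only: mult_minus_left)
  have "(- (t * qu + qw / t)) * t \<le> (2 * B) * t" using p k2 by linarith
  hence lo: "- (t * qu + qw / t) \<le> 2 * B" using t by simp
  have "(2 * B) * t \<le> (t * qu + qw / t) * t" using m k by linarith
  hence hi: "2 * B \<le> t * qu + qw / t" using t by simp
  show "(1 - t) * Re (Qf X u) - (1/t) * Re (Qf X w) \<le> Re (Qf X (u + w))"
    unfolding E qu_def[symmetric] qw_def[symmetric] using lo qw0 by (simp add: algebra_simps)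
  show "Re (Qf X (u + w)) \<le> (1 + t) * Re (Qf X u) + (1 + 1/t) * Re (Qf X w)"
    unfolding E qu_def[symmetric] qw_def[symmetric] using hi by (simp add: algebra_simps)
qed



lemma half:
  fixes A B C D :: "complex^'n^'n"
  assumes pA: "psd A" and pB: "psd B" and pC: "psd C" and pD: "psd D"
    and sum: "A + B = C + D"
    and u: "cinner \<psi> \<psi> = 1" and u': "cinner \<psi>' \<psi>' = 1"
    and C2: "C2 = (cmod (cinner \<psi>' \<psi>))\<^sup>2" and s2: "s2 = 1 - C2" "0 < s2"
    and t: "0 < t"
  shows "s2 * ((1 - t) * Re (Qf A \<psi>) - (1 + t) * Re (Qf D \<psi>))
     \<le> C2 * ((Re (trace A) - Re (Qf A \<psi>)) / t + (1 + 1/t) * (Re (trace D) - Re (Qf D \<psi>)))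
        + (Re (trace C) - Re (Qf C \<psi>'))"
proof -
  define c0 where "c0 = cinner \<psi>' \<psi>"
  define \<phi> where "\<phi> = \<psi> - c0 *s \<psi>'"
  define z where "z = \<phi> - of_real s2 *s \<psi>"
  have cc: "c0 * cnj c0 = of_real C2" unfolding C2 c0_def complex_norm_square ..
  have c0': "cinner \<psi> \<psi>' = cnj c0" unfolding c0_def by (simp add: cinner_cnj)
  have F1: "cinner \<psi>' \<phi> = 0" unfolding \<phi>_def c0_def
    by (simp add: cinner_diff_right cinner_scale_right u')
  have F2: "cinner \<psi> \<phi> = of_real s2" unfolding \<phi>_def
    by (simp add: cinner_diff_right cinner_scale_right u c0' cc s2)
  have F3: "cinner \<phi> \<phi> = of_real s2"
  proof -
    have "cinner \<phi> \<phi> = cinner \<psi> \<phi> - cnj c0 * cinner \<psi>' \<phi>"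
      by (subst (1) \<phi>_def) (simp add: cinner_diff_left cinner_scale_left)
    thus ?thesis using F1 F2 by simp
  qed
  have F4: "cinner \<psi> z = 0" unfolding z_def
    by (simp add: cinner_diff_right cinner_scale_right F2 u)
  have F5: "Re (cinner z z) = s2 * C2"
  proof -
    have pz: "cinner \<phi> \<psi> = of_real s2" using F2 cinner_cnj[of \<psi> \<phi>] by simp
    have "cinner z z = cinner \<phi> z - of_real s2 * cinner \<psi> z"
      by (subst (1) z_def) (simp add: cinner_diff_left cinner_scale_left)
    also have "\<dots> = cinner \<phi> z" using F4 by simp
    also have "\<dots> = of_real s2 - of_real s2 * of_real s2"
      unfolding z_def by (simp add: cinner_diff_right cinner_scale_right F3 pz)
    finally have "cinner z z = of_real (s2 - s2 * s2)" by simp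
    hence "Re (cinner z z) = s2 - s2 * s2" by simp
    moreover have "s2 - s2 * s2 = s2 * C2" unfolding s2(1) by (simp add: algebra_simps)
    ultimately show ?thesis by simp
  qed
  have F6: "\<phi> = of_real s2 *s \<psi> + z" unfolding z_def by simp
  have QS: "Re (Qf X (of_real s2 *s \<psi>)) = s2 * s2 * Re (Qf X \<psi>)" for X :: "complex^'n^'n"
    by (simp add: Qf_scale)
  define a where "a = Re (Qf A \<psi>)"
  define d where "d = Re (Qf D \<psi>)"
  define eA where "eA = Re (trace A) - a"
  define eD where "eD = Re (trace D) - d"
  define eC where "eC = Re (trace C) - Re (Qf C \<psi>')"
  define RA where "RA = Re (Qf A z)"
  define RD where "RD = Re (Qf D z)"
  have h1: "(1 - t) * (s2 * s2 * a) - (1/t) * RA \<le> Re (Qf A \<phi>)"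
    using L2(1)[OF pA t, of "of_real s2 *s \<psi>" z] unfolding F6[symmetric] QS a_def RA_def .
  have h2: "RA \<le> s2 * C2 * eA"
    using L1[OF pA u F4] unfolding F5 RA_def eA_def a_def .
  have h2': "(1/t) * RA \<le> (1/t) * (s2 * C2 * eA)" using h2 t by (intro mult_left_mono) auto
  have h3: "Re (Qf D \<phi>) \<le> (1 + t) * (s2 * s2 * d) + (1 + 1/t) * RD"
    using L2(2)[OF pD t, of "of_real s2 *s \<psi>" z] unfolding F6[symmetric] QS d_def RD_def .
  have h4: "RD \<le> s2 * C2 * eD"
    using L1[OF pD u F4] unfolding F5 RD_def eD_def d_def .
  have h4': "(1 + 1/t) * RD \<le> (1 + 1/t) * (s2 * C2 * eD)" using h4 t by (intro mult_left_mono) auto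
  have h5: "Re (Qf C \<phi>) \<le> s2 * eC"
    using L1[OF pC u' F1] F3 unfolding eC_def by simp
  have h6: "0 \<le> Re (Qf B \<phi>)" using psdD[OF pB] by blast
  have h7: "Re (Qf A \<phi>) + Re (Qf B \<phi>) = Re (Qf C \<phi>) + Re (Qf D \<phi>)"
    using arg_cong[OF sum, of "\<lambda>M. Re (Qf M \<phi>)"] by (simp add: Qf_add_mat)
  have main: "(1 - t) * (s2 * s2 * a) - (1/t) * (s2 * C2 * eA)
      \<le> s2 * eC + (1 + t) * (s2 * s2 * d) + (1 + 1/t) * (s2 * C2 * eD)"
    using h1 h2' h3 h4' h5 h6 h7 by linarith
  have eqL: "s2 * (s2 * ((1 - t) * a - (1 + t) * d)) = (1 - t) * (s2 * s2 * a) - (1 + t) * (s2 * s2 * d)"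
    by (simp add: algebra_simps)
  have eqR: "s2 * (C2 * (eA / t + (1 + 1/t) * eD) + eC)
      = (1/t) * (s2 * C2 * eA) + (1 + 1/t) * (s2 * C2 * eD) + s2 * eC"
    by (simp add: algebra_simps)
  have "s2 * (s2 * ((1 - t) * a - (1 + t) * d)) \<le> s2 * (C2 * (eA / t + (1 + 1/t) * eD) + eC)"
    unfolding eqL eqR using main by linarith
  hence "s2 * ((1 - t) * a - (1 + t) * d) \<le> C2 * (eA / t + (1 + 1/t) * eD) + eC"
    using s2 by simp
  thus ?thesis unfolding a_def d_def eA_def eD_def eC_def .
qed



lemma lin_aux:
  fixes G Kc A B L S02 S13 K C13 E02 E13 s2t d :: real
  assumes "G \<le> Kc + E02" "G = A - B" "L = A + S02 - S13" "Kc = 2 * K + C13" "B \<le> 2 * s2t"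
    "C13 \<le> E13" "S02 \<le> E02" "0 \<le> S13" "2 * d = E02 + E13" "0 \<le> E13" "0 \<le> E02"
  shows "L \<le> 2 * s2t + 2 * K + 2 * (2 * d)"
  using assms by (smt (verit))

lemma half_aux: fixes P a b :: real assumes "2 * P - 1 \<le> 2 * (a + b)" shows "P \<le> 1/2 + a + b"
  using assms by (simp add: field_simps)

lemma final_real:
  fixes s2 C2 x0 y0 x1 y1 e0 e1 e2 e3 :: real
  assumes s: "0 < s2" "s2 \<le> 1" "C2 = 1 - s2"
    and nn: "0 \<le> x0" "0 \<le> y0" "0 \<le> x1" "0 \<le> y1" "0 \<le> e0" "0 \<le> e1" "0 \<le> e2" "0 \<le> e3"
    and tr0: "x0 + e0 + y0 + e1 = 1" and tr1: "x1 + e2 + y1 + e3 = 1"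
    and H1: "\<And>t. 0 < t \<Longrightarrow> s2 * ((1 - t) * x0 - (1 + t) * y1) \<le> C2 * (e0 / t + (1 + 1/t) * e3) + e2"
    and H2: "\<And>t. 0 < t \<Longrightarrow> s2 * ((1 - t) * x1 - (1 + t) * y0) \<le> C2 * (e2 / t + (1 + 1/t) * e1) + e0"
    and dl: "\<delta> = 1 - (x0 + y0 + x1 + y1) / 2"
  shows "(x0 + e0 + x1 + e2) / 2 \<le> min (1/2 + sqrt \<delta> / (sqrt 2 * s2) + \<delta> / s2) 1"
proof -
  define P where "P = (x0 + e0 + x1 + e2) / 2"
  have d2: "2 * \<delta> = e0 + e1 + e2 + e3" unfolding dl using tr0 tr1 by (simp add: field_simps)
  have d0: "0 \<le> \<delta>" using d2 nn by linarith
  have hP2: "2 * P = x0 + e0 + x1 + e2" unfolding P_def by simp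
  have P1: "P \<le> 1" using hP2 tr0 tr1 nn by linarith
  have key: "s2 * (2 * P - 1) \<le> s2 * t + C2 * \<delta> / t + 2 * \<delta>" if t: "0 < t" for t
  proof -
    have G: "s2 * ((1 - t) * (x0 + x1) - (1 + t) * (y0 + y1))
        \<le> C2 * ((e0 + e1 + e2 + e3) / t + e1 + e3) + e0 + e2"
    proof -
      have "s2 * ((1 - t) * (x0 + x1) - (1 + t) * (y0 + y1))
          = s2 * ((1 - t) * x0 - (1 + t) * y1) + s2 * ((1 - t) * x1 - (1 + t) * y0)"
        by (simp add: algebra_simps)
      also have "\<dots> \<le> (C2 * (e0 / t + (1 + 1/t) * e3) + e2) + (C2 * (e2 / t + (1 + 1/t) * e1) + e0)"
        using H1[OF t] H2[OF t] by linarith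
      also have "\<dots> = C2 * ((e0 + e1 + e2 + e3) / t + e1 + e3) + e0 + e2"
        using t by (simp add: field_simps)
      finally show ?thesis .
    qed
    have XY: "x0 + x1 + y0 + y1 \<le> 2" using tr0 tr1 nn by linarith
    have st: "s2 * t * (x0 + x1 + y0 + y1) \<le> s2 * t * 2"
      using XY s t by (intro mult_left_mono) auto
    have C2le: "C2 \<le> 1" "0 \<le> C2" using s by auto
    have c1: "C2 * (e1 + e3) \<le> 1 * (e1 + e3)" using C2le nn by (intro mult_right_mono) auto
    have c2: "s2 * (e0 + e2) \<le> 1 * (e0 + e2)" using s nn by (intro mult_right_mono) auto
    have c3: "0 \<le> s2 * (e1 + e3)" using s nn by simp
    have eG: "s2 * ((1 - t) * (x0 + x1) - (1 + t) * (y0 + y1))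
        = s2 * ((x0 + x1) - (y0 + y1)) - s2 * t * (x0 + x1 + y0 + y1)" by (simp add: algebra_simps)
    have eP0: "2 * (2 * P - 1) = ((x0 + x1) - (y0 + y1)) + (e0 + e2) - (e1 + e3)"
      using hP2 tr0 tr1 by (smt (verit))
    have eP: "s2 * (2 * (2 * P - 1)) = s2 * ((x0 + x1) - (y0 + y1)) + s2 * (e0 + e2) - s2 * (e1 + e3)"
      unfolding eP0 by (simp add: algebra_simps)
    have eD: "C2 * ((e0 + e1 + e2 + e3) / t + e1 + e3) = 2 * (C2 * \<delta> / t) + C2 * (e1 + e3)"
      using d2 t by (simp add: field_simps)
    have F: "s2 * (2 * (2 * P - 1)) \<le> 2 * (s2 * t) + 2 * (C2 * \<delta> / t) + 2 * (2 * \<delta>)"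
    proof -
      have f1: "s2 * ((1 - t) * (x0 + x1) - (1 + t) * (y0 + y1))
          \<le> C2 * ((e0 + e1 + e2 + e3) / t + e1 + e3) + (e0 + e2)" using G by simp
      have f5: "s2 * t * (x0 + x1 + y0 + y1) \<le> 2 * (s2 * t)" using st by simp
      have f6: "C2 * (e1 + e3) \<le> e1 + e3" using c1 by simp
      have f7: "s2 * (e0 + e2) \<le> e0 + e2" using c2 by simp
      have f9: "2 * \<delta> = (e0 + e2) + (e1 + e3)" using d2 by simp
      have f10: "0 \<le> e1 + e3" "0 \<le> e0 + e2" using nn by simp_all
      show ?thesis using lin_aux[OF f1 eG eP eD f5 f6 f7 c3 f9 f10] .
    qed
    have eq1: "s2 * (2 * (2 * P - 1)) = 2 * (s2 * (2 * P - 1))" by (simp only: mult.left_commute)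
    have eq2: "2 * (s2 * t) + 2 * (C2 * \<delta> / t) + 2 * (2 * \<delta>) = 2 * (s2 * t + C2 * \<delta> / t + 2 * \<delta>)"
      by (simp only: distrib_left)
    have "2 * (s2 * (2 * P - 1)) \<le> 2 * (s2 * t + C2 * \<delta> / t + 2 * \<delta>)" using F unfolding eq1 eq2 .
    thus ?thesis by simp
  qed
  have main: "s2 * (2 * P - 1) \<le> sqrt 2 * sqrt \<delta> + 2 * \<delta>"
  proof (cases "\<delta> = 0")
    case True
    have "2 * P - 1 \<le> 0"
    proof (rule ccontr)
      assume "\<not> 2 * P - 1 \<le> 0"
      hence g: "0 < 2 * P - 1" by simp
      define h where "h = (2 * P - 1) / 2"
      have hh: "2 * P - 1 = 2 * h" unfolding h_def by simp
      have hpos: "0 < h" using g hh by linarith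
      have "s2 * (2 * P - 1) \<le> s2 * h" using key[OF hpos] True by simp
      hence "s2 * (2 * h) \<le> s2 * h" unfolding hh .
      hence "2 * h \<le> h" using s by (simp add: mult_le_cancel_left)
      thus False using hpos by linarith
    qed
    hence "s2 * (2 * P - 1) \<le> 0" using s by (intro mult_nonneg_nonpos) auto
    thus ?thesis using True by simp
  next
    case False
    hence dpos: "0 < \<delta>" using d0 by simp
    define a where "a = sqrt \<delta>"
    define r where "r = sqrt (2::real)"
    have apos: "0 < a" unfolding a_def using dpos by simp
    have aa: "a * a = \<delta>" unfolding a_def using d0 by simp
    have rpos: "0 < r" unfolding r_def by simp
    have rr: "r * r = 2" unfolding r_def by simp
    define t where "t = a / (r * s2)"
    have tpos: "0 < t" unfolding t_def using apos rpos s by simp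
    have e1: "s2 * t = a / r" unfolding t_def using s rpos by (simp add: field_simps)
    have e2: "C2 * \<delta> / t = C2 * s2 * r * a" unfolding t_def using s rpos apos aa[symmetric]
      by (simp add: field_simps)
    have cs: "C2 * s2 \<le> 1/4"
    proof -
      have "0 \<le> (s2 - 1/2) * (s2 - 1/2)" by simp
      moreover have "C2 * s2 = 1/4 - (s2 - 1/2) * (s2 - 1/2)" unfolding s(3) by (simp add: field_simps)
      ultimately show ?thesis by linarith
    qed
    have ar: "a / r = r * a / 2"
    proof -
      have "r * a / 2 = (r * a) / (r * r)" using rr by simp
      also have "\<dots> = a / r" using rpos by simp
      finally show ?thesis by simp
    qed
    have ra0: "0 \<le> r * a" using rpos apos by simp
    have m: "(C2 * s2) * (r * a) \<le> (1/4) * (r * a)" using cs ra0 by (rule mult_right_mono)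
    have e2': "C2 * \<delta> / t = (C2 * s2) * (r * a)" unfolding e2 by (simp add: algebra_simps)
    have "s2 * (2 * P - 1) \<le> s2 * t + C2 * \<delta> / t + 2 * \<delta>" using key[OF tpos] .
    also have "\<dots> \<le> r * a + 2 * \<delta>" unfolding e1 ar e2' using m ra0 by linarith
    finally show ?thesis unfolding r_def a_def .
  qed
  have r2: "sqrt 2 * sqrt 2 = (2::real)" by simp
  have m2: "(2 * P - 1) * s2 \<le> sqrt 2 * sqrt \<delta> + 2 * \<delta>" using main by (simp add: mult.commute)
  hence m3: "2 * P - 1 \<le> (sqrt 2 * sqrt \<delta> + 2 * \<delta>) / s2" using s by (simp add: pos_le_divide_eq)
  have eq: "(sqrt 2 * sqrt \<delta> + 2 * \<delta>) / s2 = 2 * (sqrt \<delta> / (sqrt 2 * s2) + \<delta> / s2)"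
  proof -
    have "sqrt 2 * sqrt \<delta> = 2 * sqrt \<delta> / sqrt 2"
      using r2 by (simp add: field_simps)
    thus ?thesis using s by (simp add: field_simps)
  qed
  have "P \<le> 1/2 + sqrt \<delta> / (sqrt 2 * s2) + \<delta> / s2" using m3 unfolding eq by (rule half_aux)
  thus ?thesis using P1 unfolding P_def by simp
qed



lemma trace_add: "trace (A + B) = trace A + trace B"
  by (simp add: trace_def sum.distrib)

lemma core:
  fixes X0 Y0 X1 Y1 :: "complex^'n^'n"
  assumes pX0: "psd X0" and pY0: "psd Y0" and pX1: "psd X1" and pY1: "psd Y1"
    and sum: "X0 + Y0 = X1 + Y1" and tr: "Re (trace (X0 + Y0)) = 1"
    and u0: "cinner \<psi>0 \<psi>0 = 1" and u1: "cinner \<psi>1 \<psi>1 = 1"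
    and ov: "(cmod (cinner \<psi>1 \<psi>0))\<^sup>2 = (cos \<theta>)\<^sup>2"
    and th: "0 < \<theta>" "\<theta> \<le> pi / 2"
  shows "(Re (trace X0) + Re (trace X1)) / 2
     \<le> Fbound \<theta> ((Re (Qf X0 \<psi>0) + Re (Qf Y0 \<psi>1) + Re (Qf X1 \<psi>1) + Re (Qf Y1 \<psi>0)) / 2)"
proof -
  define s2 where "s2 = (sin \<theta>)\<^sup>2"
  define C2 where "C2 = (cos \<theta>)\<^sup>2"
  have sC: "s2 = 1 - C2" unfolding s2_def C2_def using sin_cos_squared_add[of \<theta>] by linarith
  have sC': "C2 = 1 - s2" using sC by simp
  have s2pos: "0 < s2" unfolding s2_def using th sin_gt_zero[of \<theta>] by auto
  have s2le: "s2 \<le> 1" unfolding s2_def by (simp add: abs_sin_le_one power_le_one_iff abs_square_le_1)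
  have ov1: "C2 = (cmod (cinner \<psi>1 \<psi>0))\<^sup>2" unfolding C2_def using ov by simp
  have ov2: "C2 = (cmod (cinner \<psi>0 \<psi>1))\<^sup>2"
    unfolding ov1 by (metis cinner_cnj complex_mod_cnj)
  define x0 where "x0 = Re (Qf X0 \<psi>0)"
  define y0 where "y0 = Re (Qf Y0 \<psi>1)"
  define x1 where "x1 = Re (Qf X1 \<psi>1)"
  define y1 where "y1 = Re (Qf Y1 \<psi>0)"
  define e0 where "e0 = Re (trace X0) - x0"
  define e1 where "e1 = Re (trace Y0) - y0"
  define e2 where "e2 = Re (trace X1) - x1"
  define e3 where "e3 = Re (trace Y1) - y1"
  have nn: "0 \<le> x0" "0 \<le> y0" "0 \<le> x1" "0 \<le> y1" "0 \<le> e0" "0 \<le> e1" "0 \<le> e2" "0 \<le> e3"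
    unfolding x0_def y0_def x1_def y1_def e0_def e1_def e2_def e3_def
    using psdD[OF pX0] psdD[OF pY0] psdD[OF pX1] psdD[OF pY1]
      E0[OF pX0 u0] E0[OF pY0 u1] E0[OF pX1 u1] E0[OF pY1 u0] by auto
  have tr0: "x0 + e0 + y0 + e1 = 1"
    unfolding e0_def e1_def using tr by (simp add: trace_add)
  have tr1: "x1 + e2 + y1 + e3 = 1"
    unfolding e2_def e3_def using tr unfolding sum by (simp add: trace_add)
  have H1: "s2 * ((1 - t) * x0 - (1 + t) * y1) \<le> C2 * (e0 / t + (1 + 1/t) * e3) + e2" if "0 < t" for t
    using half[OF pX0 pY0 pX1 pY1 sum u0 u1 ov1 sC s2pos that]
    unfolding x0_def y1_def e0_def e3_def e2_def x1_def .
  have H2: "s2 * ((1 - t) * x1 - (1 + t) * y0) \<le> C2 * (e2 / t + (1 + 1/t) * e1) + e0" if "0 < t" for t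
    using half[OF pX1 pY1 pX0 pY0 sum[symmetric] u1 u0 ov2 sC s2pos that]
    unfolding x0_def y0_def e0_def e1_def e2_def x1_def .
  define u where "u = (x0 + y0 + x1 + y1) / 2"
  have dl: "1 - u = 1 - (x0 + y0 + x1 + y1) / 2" unfolding u_def ..
  have "(x0 + e0 + x1 + e2) / 2 \<le> min (1/2 + sqrt (1 - u) / (sqrt 2 * s2) + (1 - u) / s2) 1"
    using final_real[OF s2pos s2le sC' nn tr0 tr1 H1 H2 dl] by blast
  moreover have "(x0 + e0 + x1 + e2) / 2 = (Re (trace X0) + Re (trace X1)) / 2"
    unfolding e0_def e2_def by simp
  moreover have "u = (Re (Qf X0 \<psi>0) + Re (Qf Y0 \<psi>1) + Re (Qf X1 \<psi>1) + Re (Qf Y1 \<psi>0)) / 2"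
    unfolding u_def x0_def y0_def x1_def y1_def ..
  ultimately show ?thesis unfolding Fbound_def s2_def by simp
qed

theorem lemma1:
  fixes \<theta> :: real
    and \<rho> :: "complex^('a::finite \<times> 'b::finite)^('a \<times> 'b)"
    and M :: "bool \<Rightarrow> bool \<Rightarrow> complex^'a^'a"
    and \<psi> :: "bool \<Rightarrow> complex^'b"
  assumes "0 < \<theta>" and "\<theta> \<le> pi / 2"
    and "cinner (\<psi> False) (\<psi> False) = 1" and "cinner (\<psi> True) (\<psi> True) = 1"
    and "(cmod (cinner (\<psi> False) (\<psi> True)))\<^sup>2 = (cos \<theta>)\<^sup>2"
    and "density \<rho>"
    and "\<And>b. povm2 (M b)"
  shows "(\<forall>c. Py \<rho> M c \<le> Fbound \<theta> (Ef \<rho> M \<psi>))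
         \<and> concave_on {0..1} (Fbound \<theta>)
         \<and> antimono_on {0..1} (Fbound \<theta>)"
proof (intro conjI)
  show "concave_on {0..1} (Fbound \<theta>)" by (rule Fbound_concave[OF assms(1,2)])
  show "antimono_on {0..1} (Fbound \<theta>)" by (rule Fbound_antimono[OF assms(1,2)])
  have p\<rho>: "psd \<rho>" and t\<rho>: "trace \<rho> = 1" using assms(6) unfolding density_def by auto
  define X where "X b a = ptr \<rho> (M b a)" for b a
  have pM: "psd (M b a)" for b a using assms(7)[of b] unfolding povm2_def by (cases a) auto
  have pX: "psd (X b a)" for b a unfolding X_def by (rule psd_ptr[OF p\<rho> pM])
  have sX: "X b False + X b True = ptr \<rho> (mat 1)" for b
    unfolding X_def ptr_add[symmetric] using assms(7)[of b] unfolding povm2_def by simp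
  have tr: "Re (trace (X b False + X b True)) = 1" for b unfolding sX trace_ptr_id t\<rho> by simp
  have ov': "(cmod (cinner (\<psi> True) (\<psi> False)))\<^sup>2 = (cos \<theta>)\<^sup>2"
    using assms(5) by (metis cinner_cnj complex_mod_cnj)
  have Ef: "Ef \<rho> M \<psi> = (Re (Qf (X False False) (\<psi> False)) + Re (Qf (X False True) (\<psi> True))
      + Re (Qf (X True True) (\<psi> True)) + Re (Qf (X True False) (\<psi> False))) / 2"
    unfolding Ef_def X_def by (simp add: UNIV_bool prob_proj)
  have Ef': "Ef \<rho> M \<psi> = (Re (Qf (X False True) (\<psi> True)) + Re (Qf (X False False) (\<psi> False))
      + Re (Qf (X True False) (\<psi> False)) + Re (Qf (X True True) (\<psi> True))) / 2"
    unfolding Ef by simp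
  have sFF: "X False False + X False True = X True True + X True False"
    using sX[of False] sX[of True] by (metis add.commute)
  have sFT: "X False True + X False False = X True False + X True True"
    using sX[of False] sX[of True] by (metis add.commute)
  have tFF: "Re (trace (X False False + X False True)) = 1" by (rule tr)
  have tFT: "Re (trace (X False True + X False False)) = 1" using tr[of False] by (metis add.commute)
  show "\<forall>c. Py \<rho> M c \<le> Fbound \<theta> (Ef \<rho> M \<psi>)"
  proof
    fix c
    show "Py \<rho> M c \<le> Fbound \<theta> (Ef \<rho> M \<psi>)"
    proof (cases c)
      case False
      hence c: "c = False" by simp
      have "Py \<rho> M c = (Re (trace (X False False)) + Re (trace (X True True))) / 2"
        unfolding Py_def X_def c by (simp add: UNIV_bool prob_id)
      also have "\<dots> \<le> Fbound \<theta> (Ef \<rho> M \<psi>)" unfolding Ef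
        by (rule core[OF pX pX pX pX sFF tFF assms(3,4) ov' assms(1,2)])
      finally show ?thesis .
    next
      case True
      hence c: "c = True" by simp
      have "Py \<rho> M c = (Re (trace (X False True)) + Re (trace (X True False))) / 2"
        unfolding Py_def X_def c by (simp add: UNIV_bool prob_id)
      also have "\<dots> \<le> Fbound \<theta> (Ef \<rho> M \<psi>)" unfolding Ef'
        by (rule core[OF pX pX pX pX sFT tFT assms(4,3,5) assms(1,2)])
      finally show ?thesis .
    qed
  qed
qed

end
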